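(* Let $k\ge1$ be an integer. There is a non-zero constant $c\in\mathbb{Q}$ such that $$P_k(1,\beta,0)=c\cdot\prod_{i=1}^r\left(\beta-\frac{1}{(2i-1)^2}\right)^k\cdot\prod_{i=1}^{k-1}\left(\beta-\frac{1}{(2r+2i-1)^2}\right)^{k-i}$$ in $\mathbb{Q}[\beta]$.
   Context: Fix an integer $r\ge1$ and indeterminates $\alpha,\beta,\gamma$. Define polynomials $c_n=c_n(\alpha,\beta,\gamma)\in\mathbb{Q}[\alpha,\beta,\gamma]$ by $c_n=0$ for $n<0$, $c_0=1$, and for every integer $n\ge-3$, $$(n+4)c_{n+4}+(2n+6-r)\alpha c_{n+3}+\left[(n+2-r)\alpha^2+(2n+5-2r)\frac{\alpha^2-\beta}{4}\right]c_{n+2}+\left[(2n+3-3r)\alpha\frac{\alpha^2-\beta}{4}+\frac{\gamma}{2}\right]c_{n+1}+\frac{1}{16}(\alpha^2-\beta)^2(n+1-2r)c_n=0.$$ For $k\ge1$ define $P_k(\alpha,\beta,\gamma):=\det\big(c_{k+2r-1+j-i}\big)_{1\le i,j\le k}$; $P_k(1,\beta,0)$ is its specialization at $\alpha=1,\gamma=0$. *)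

theory Defs
  imports "HOL-Computational_Algebra.Polynomial" "Jordan_Normal_Form.Determinant"
begin

text \<open>The sequence c_n, evaluated at arbitrary values alpha = a, beta = b, gamma = g
  in the ring Q[beta] (univariate rational polynomials). Indices are integers;
  c_n = 0 for n < 0, c_0 = 1, and for n \<ge> 1 the recurrence (with m = n - 4 \<ge> -3)
  is solved for (m+4) c_(m+4).\<close>

function cseq :: "nat \<Rightarrow> rat poly \<Rightarrow> rat poly \<Rightarrow> rat poly \<Rightarrow> int \<Rightarrow> rat poly" where
  "cseq r a b g n =
    (if n < 0 then 0 else if n = 0 then 1 else
      (let m = n - 4; d = a^2 - b; R = int r in
        - smult (1 / of_int (m + 4))
          ( smult (of_int (2*m + 6 - R)) a * cseq r a b g (n - 1)
          + (smult (of_int (m + 2 - R)) (a^2) + smult (of_int (2*m + 5 - 2*R) / 4) d)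
              * cseq r a b g (n - 2)
          + (smult (of_int (2*m + 3 - 3*R) / 4) (a * d) + smult (1/2) g)
              * cseq r a b g (n - 3)
          + smult (of_int (m + 1 - 2*R) / 16) (d^2) * cseq r a b g (n - 4))))"
  by pat_completeness auto
termination
  by (relation "measure (\<lambda>(r, a, b, g, n). nat n)") auto

declare cseq.simps[simp del]

text \<open>P_k(alpha,beta,gamma) = det (c_(k+2r-1+j-i))_(1\<le>i,j\<le>k); 0-based indices
  here, which does not change j - i.\<close>

definition Pk :: "nat \<Rightarrow> nat \<Rightarrow> rat poly \<Rightarrow> rat poly \<Rightarrow> rat poly \<Rightarrow> rat poly" where
  "Pk r k a b g =
     det (mat k k (\<lambda>(i, j). cseq r a b g (int k + 2 * int r - 1 + int j - int i)))"

end

theory Submission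
  imports Defs "HOL-Computational_Algebra.Formal_Power_Series" "HOL-Computational_Algebra.Polynomial_FPS"
    "HOL-Computational_Algebra.Field_as_Ring"
begin


function crat :: "nat \<Rightarrow> rat \<Rightarrow> int \<Rightarrow> rat" where
  "crat r x n =
    (if n < 0 then 0 else if n = 0 then 1 else
      (let m = n - 4; d = 1 - x; R = int r in
        - (1 / of_int (m + 4)) *
          ( of_int (2*m + 6 - R) * crat r x (n - 1)
          + (of_int (m + 2 - R) + of_int (2*m + 5 - 2*R) / 4 * d)
              * crat r x (n - 2)
          + (of_int (2*m + 3 - 3*R) / 4 * d)
              * crat r x (n - 3)
          + of_int (m + 1 - 2*R) / 16 * d^2 * crat r x (n - 4))))"
  by pat_completeness auto
termination
  by (relation "measure (\<lambda>(r, x, n). nat n)") auto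

declare crat.simps[simp del]

lemma poly_cseq_aux:
  "a = 1 \<Longrightarrow> b = [:0,1:] \<Longrightarrow> g = 0 \<Longrightarrow> poly (cseq r a b g n) x = crat r x n"
proof (induction r a b g n rule: cseq.induct)
  case (1 r a b g n)
  show ?case
    apply (subst cseq.simps, subst crat.simps)
    using 1 by (simp add: Let_def power2_eq_square)
qed

lemma poly_cseq: "poly (cseq r 1 [:0,1:] 0 n) x = crat r x n"
  by (rule poly_cseq_aux) auto

interpretation poly_hom: comm_ring_hom "\<lambda>p. poly p a" by (unfold_locales, auto)
thm poly_hom.hom_det
definition aa :: "nat \<Rightarrow> rat" where "aa j = of_nat (j-1) / of_nat (2*j-1)"
definition bb :: "nat \<Rightarrow> rat" where "bb j = of_nat j / of_nat (2*j-1)"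
definition Ap :: "nat \<Rightarrow> rat poly" where "Ap j = [:1, aa j:]"
definition Bp :: "nat \<Rightarrow> rat poly" where "Bp j = [:1, bb j:]"
definition Hp :: "nat \<Rightarrow> nat \<Rightarrow> rat poly" where "Hp r j = Ap j ^ r * Bp j ^ (r+j-1)"
definition FF :: "nat \<Rightarrow> nat \<Rightarrow> rat fps" where
  "FF r j = fps_of_poly (Hp r j) * inverse (fps_of_poly (Ap j)) ^ j"
definition Nump :: "nat \<Rightarrow> nat \<Rightarrow> rat poly" where
  "Nump r j = (let d = aa j * bb j in
     [: of_nat r, of_nat r + (2*of_nat r-1)*d, (3*of_nat r-1)*d, (2*of_nat r-1)*d^2 :])"

lemma twoj: "j \<ge> 1 \<Longrightarrow> (of_nat (2*j-1)::rat) = 2*of_nat j - 1"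
  by (simp add: of_nat_diff)
lemma twoj_nz: "j \<ge> 1 \<Longrightarrow> (of_nat (2*j-1)::rat) \<noteq> 0"
  by (simp only: of_nat_eq_0_iff)
lemma twoj_nz2: "j \<ge> 1 \<Longrightarrow> 2 * (of_nat j::rat) - 1 \<noteq> 0"
  using twoj_nz twoj by metis

lemma ab_sum: "j \<ge> 1 \<Longrightarrow> aa j + bb j = 1"
proof -
  assume j: "j \<ge> 1"
  have "aa j + bb j = (of_nat (j-1) + of_nat j) / of_nat (2*j-1)"
    by (simp add: aa_def bb_def add_divide_distrib)
  also have "of_nat (j-1) + of_nat j = (of_nat (2*j-1)::rat)"
    unfolding of_nat_add[symmetric] using j by (intro arg_cong[where f=of_nat]) simp
  finally show ?thesis using twoj_nz[OF j] by simp
qed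

lemma ab_rel: "j \<ge> 1 \<Longrightarrow> of_nat j * aa j = of_nat (j-1) * bb j"
  by (simp add: aa_def bb_def mult.commute)

lemma P2: assumes "j \<ge> 1" "r \<ge> 1"
  shows "Ap j * Bp j * (smult ((of_nat r - of_nat j) * aa j) (Bp j) + smult (of_nat (r+j-1) * bb j) (Ap j)) = Nump r j"
proof -
  have s: "a + b = 1" and t: "of_nat j * a = of_nat (j-1) * b" if "a = aa j" "b = bb j" for a b
    using ab_sum ab_rel assms that by auto
  have e0: "of_nat r * aa j + of_nat r * bb j = of_nat r"
    using s[OF refl refl] by (metis distrib_left mult_1_right)
  have e1: "(of_nat r - of_nat j) * aa j + of_nat (r+j-1) * bb j = of_nat r"
    using e0 t[OF refl refl] assms by (simp add: of_nat_diff algebra_simps)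
  show ?thesis
    unfolding Ap_def Bp_def Nump_def Let_def
    using s[OF refl refl] e1 assms
    by (simp add: algebra_simps of_nat_diff power2_eq_square) 
qed

lemma P1: assumes "j \<ge> 1" "r \<ge> 1"
  shows "Ap j * pderiv (Hp r j) - smult (of_nat j * aa j) (Hp r j) =
    Ap j ^ r * Bp j ^ (r+j-2) * (smult ((of_nat r - of_nat j) * aa j) (Bp j) + smult (of_nat (r+j-1) * bb j) (Ap j))"
proof -
  obtain r' where r: "r = Suc r'" using assms by (cases r) auto
  obtain p' where p: "r+j-1 = Suc p'" "r+j-2 = p'" using assms by (cases "r+j-1") auto
  have dA: "pderiv (Ap j) = [:aa j:]" by (simp add: Ap_def pderiv_pCons)
  have dB: "pderiv (Bp j) = [:bb j:]" by (simp add: Bp_def pderiv_pCons)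
  have pp: "of_nat (r+j-1) = (of_nat (Suc p') :: rat)" using p by simp
  show ?thesis
    unfolding Hp_def p pp unfolding r
    apply (simp only: pderiv_mult pderiv_power_Suc dA dB)
    apply (simp add: algebra_simps del: of_nat_Suc)
    by (simp add: smult_add_left[symmetric])
qed

lemma inv_pow_cancel:
  fixes A I :: "'a::comm_ring_1"
  assumes "A * I = 1" shows "A ^ n * I ^ n = 1"
  by (metis assms power_mult_distrib power_one)

lemma ODE: assumes "j \<ge> 1" "r \<ge> 1"
  shows "fps_of_poly ((Ap j * Bp j)^2) * fps_deriv (FF r j) = fps_of_poly (Nump r j) * FF r j"
proof -
  define A where "A = fps_of_poly (Ap j)"
  define I where "I = inverse A"
  define H where "H = fps_of_poly (Hp r j)"
  have A0: "fps_nth A 0 = 1" by (simp add: A_def Ap_def)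
  have AI: "A * I = 1" unfolding I_def by (rule inverse_mult_eq_1') (simp add: A0)
  have dA: "fps_deriv A = fps_const (aa j)"
    by (simp add: A_def Ap_def fps_of_poly_pderiv[symmetric] pderiv_pCons fps_of_poly_const)
  have dI: "fps_deriv I = - fps_const (aa j) * I^2"
    unfolding I_def using fps_inverse_deriv[of A] A0 dA by simp
  obtain j' where j: "j = Suc j'" using assms by (cases j) auto
  have F: "FF r j = H * I ^ j" by (simp add: FF_def H_def I_def A_def)
  have c1: "A ^ Suc j * FF r j = A * H"
  proof -
    have "A ^ Suc j * FF r j = A * H * (A ^ j * I ^ j)" by (simp add: F mult_ac)
    then show ?thesis using inv_pow_cancel[OF AI] by simp
  qed
  have c2: "A ^ Suc j * fps_deriv (FF r j) = A * fps_deriv H - fps_const (of_nat j * aa j) * H"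
  proof -
    have d1: "fps_deriv (I^j) = fps_const (of_nat j) * fps_deriv I * I^j'"
      using fps_deriv_power[of I j] j by simp
    have ip: "I^2 * I^j' = I^Suc j" by (simp add: j power2_eq_square)
    have "fps_deriv (FF r j) = fps_deriv H * I^j + H * (fps_const (of_nat j) * (- fps_const (aa j) * I^2) * I^j')"
      by (simp add: F d1 dI)
    also have "\<dots> = fps_deriv H * I^j - fps_const (of_nat j) * fps_const (aa j) * H * (I^2 * I^j')"
      by (simp add: algebra_simps del: fps_const_neg fps_const_mult)
    finally have eqD: "fps_deriv (FF r j) = fps_deriv H * I^j - fps_const (of_nat j * aa j) * H * I ^ Suc j"
      unfolding ip by simp
    have "A ^ Suc j * fps_deriv (FF r j) = A * fps_deriv H * (A^j * I^j) - fps_const (of_nat j * aa j) * H * (A ^ Suc j * I ^ Suc j)"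
      unfolding eqD by (simp add: algebra_simps)
    then show ?thesis by (simp only: inv_pow_cancel[OF AI] mult_1_right)
  qed
  have c3: "A * fps_deriv H - fps_const (of_nat j * aa j) * H =
     fps_of_poly (Ap j ^ r * Bp j ^ (r+j-2) * (smult ((of_nat r - of_nat j) * aa j) (Bp j) + smult (of_nat (r+j-1) * bb j) (Ap j)))"
    unfolding P1[OF assms, symmetric] A_def H_def
    by (simp add: fps_of_poly_diff fps_of_poly_mult fps_of_poly_pderiv fps_of_poly_smult)
  have c4: "(Ap j * Bp j)^2 * (Ap j ^ r * Bp j ^ (r+j-2) * (smult ((of_nat r - of_nat j) * aa j) (Bp j) + smult (of_nat (r+j-1) * bb j) (Ap j)))
      = Nump r j * (Ap j * Hp r j)"
  proof -
    have e: "r+j-1 = Suc (r+j-2)" using assms by simp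
    have "Bp j ^ (r+j-1) = Bp j * Bp j ^ (r+j-2)" by (simp only: e power_Suc)
    then show ?thesis unfolding P2[OF assms, symmetric] Hp_def by (simp add: algebra_simps power2_eq_square)
  qed
  have "A ^ Suc j * (fps_of_poly ((Ap j * Bp j)^2) * fps_deriv (FF r j)) = A ^ Suc j * (fps_of_poly (Nump r j) * FF r j)"
  proof -
    have "A ^ Suc j * (fps_of_poly ((Ap j * Bp j)^2) * fps_deriv (FF r j)) = fps_of_poly ((Ap j * Bp j)^2) * (A ^ Suc j * fps_deriv (FF r j))"
      by (simp add: mult_ac)
    also have "\<dots> = fps_of_poly (Nump r j * (Ap j * Hp r j))"
      unfolding c2 c3 c4[symmetric] by (simp add: fps_of_poly_mult)
    also have "\<dots> = fps_of_poly (Nump r j) * (A ^ Suc j * FF r j)"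
      unfolding c1 by (simp add: fps_of_poly_mult A_def H_def)
    finally show ?thesis by (simp add: mult_ac)
  qed
  moreover have "A \<noteq> 0" using A0 by auto
  hence "A ^ Suc j \<noteq> 0" by (rule power_not_zero)
  ultimately show ?thesis by simp
qed




definition beta :: "nat \<Rightarrow> rat" where "beta j = 1 / (of_nat (2*j-1))^2"
definition Fz :: "nat \<Rightarrow> nat \<Rightarrow> int \<Rightarrow> rat" where
  "Fz r j k = (if k < 0 then 0 else fps_nth (FF r j) (nat k))"

lemma beta_d: assumes j: "j \<ge> 1" shows "1 - beta j = 4 * (aa j * bb j)"
proof -
  define t where "t = (of_nat (2*j-1)::rat)"
  have t0: "t \<noteq> 0" using twoj_nz[OF j] t_def by simp
  have "1 - beta j = (t^2 - 1)/t^2" using t0 by (simp add: beta_def t_def field_simps)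
  also have "t^2 - 1 = 4*(of_nat(j-1)*of_nat j)"
    using j by (simp add: t_def twoj of_nat_diff algebra_simps power2_eq_square)
  also have "4*(of_nat(j-1)*of_nat j)/t^2 = 4 * (aa j * bb j)"
    by (simp add: aa_def bb_def t_def power2_eq_square)
  finally show ?thesis .
qed

lemma fps_poly_mult_nth5:
  fixes p :: "rat poly" and G :: "rat fps"
  assumes "degree p < 5"
  shows "fps_nth (fps_of_poly p * G) n = (\<Sum>i<5. coeff p i * (if i \<le> n then fps_nth G (n-i) else 0))"
proof -
  have "fps_nth (fps_of_poly p * G) n = (\<Sum>i\<in>{..n}. coeff p i * fps_nth G (n-i))"
    by (simp add: fps_mult_nth atLeast0AtMost)
  also have "\<dots> = (\<Sum>i\<in>{..n} \<inter> {..<5}. coeff p i * fps_nth G (n-i))"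
  proof (rule sum.mono_neutral_right)
    show "\<forall>i\<in>{..n} - {..n} \<inter> {..<5}. coeff p i * fps_nth G (n - i) = 0"
    proof
      fix i assume "i \<in> {..n} - {..n} \<inter> {..<5}"
      then have "degree p < i" using assms by auto
      then show "coeff p i * fps_nth G (n - i) = 0" by (simp add: coeff_eq_0)
    qed
  qed auto
  also have "{..n} \<inter> {..<5} = {..<5::nat} \<inter> {i. i \<le> n}" by auto
  also have "(\<Sum>i\<in>{..<5::nat} \<inter> {i. i \<le> n}. coeff p i * fps_nth G (n-i)) = (\<Sum>i<5. if i \<le> n then coeff p i * fps_nth G (n-i) else 0)"
    by (subst sum.inter_restrict) auto
  also have "\<dots> = (\<Sum>i<5. coeff p i * (if i \<le> n then fps_nth G (n-i) else 0))"
    by (rule sum.cong) auto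
  finally show ?thesis .
qed

lemma FF0: "fps_nth (FF r j) 0 = 1"
  by (simp add: FF_def Hp_def Ap_def Bp_def fps_power_zeroth coeff_mult_0 coeff_0_power)


lemma Q2eq: assumes "j \<ge> 1" shows "(Ap j * Bp j)^2 = [:1, 2, 1 + 2*(aa j * bb j), 2*(aa j * bb j), (aa j * bb j)^2:]"
proof -
  have "Ap j * Bp j = [:1, 1, aa j * bb j:]" using ab_sum[OF assms] by (simp add: Ap_def Bp_def)
  moreover have "[:1, 1, d:]^2 = [:1, 2, 1 + 2*d, 2*d, d^2:]" for d :: rat
    by (simp add: power2_eq_square)
  ultimately show ?thesis by simp
qed
lemma deg5: "degree [:a,b,c,d,e:] < (5::nat)"
  using degree_pCons_le[of a "[:b,c,d,e:]"] degree_pCons_le[of b "[:c,d,e:]"]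
    degree_pCons_le[of c "[:d,e:]"] degree_pCons_le[of d "[:e:]"] by simp

lemma deg5': "degree [:a,b,c,d:] < (5::nat)"
  using degree_pCons_le[of a "[:b,c,d:]"] degree_pCons_le[of b "[:c,d:]"]
    degree_pCons_le[of c "[:d:]"] by simp

lemma dterm: "(if i \<le> m then fps_nth (fps_deriv (FF r j)) (m-i) else 0) = of_int (int (Suc m) - int i) * Fz r j (int (Suc m) - int i)"
proof (cases "i \<le> m")
  case True
  then have "nat (int (Suc m) - int i) = m - i + 1" by simp
  then show ?thesis using True by (simp add: Fz_def of_nat_diff)
next
  case False
  then show ?thesis by (cases "i = Suc m") (auto simp: Fz_def)
qed

lemma fterm: "(if i \<le> m then fps_nth (FF r j) (m-i) else 0) = Fz r j (int m - int i)"
  by (auto simp: Fz_def nat_diff_distrib)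

lemma rec_F1: assumes "j \<ge> 1" "r \<ge> 1"
  shows "(\<Sum>i<5. coeff ((Ap j * Bp j)^2) i * (of_int (int (Suc m) - int i) * Fz r j (int (Suc m) - int i)))
       = (\<Sum>i<5. coeff (Nump r j) i * Fz r j (int m - int i))"
proof -
  have "fps_nth (fps_of_poly ((Ap j * Bp j)^2) * fps_deriv (FF r j)) m = fps_nth (fps_of_poly (Nump r j) * FF r j) m"
    using ODE[OF assms] by simp
  then show ?thesis
    apply (subst (asm) fps_poly_mult_nth5)
     apply (simp add: Q2eq[OF assms(1)] deg5)
    apply (subst (asm) fps_poly_mult_nth5)
     apply (simp add: Nump_def Let_def deg5')
    by (simp only: dterm fterm)
qed

lemma sum5: "(\<Sum>i<(5::nat). f i) = f 0 + f 1 + f 2 + f 3 + (f 4 :: rat)"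
  by (simp add: numeral_eq_Suc)

lemma rec_F2: assumes "j \<ge> 1" "r \<ge> 1" "n \<ge> 1"
  shows "of_int n * Fz r j n + 2 * of_int (n-1) * Fz r j (n-1) + (1 + 2*(aa j * bb j)) * of_int (n-2) * Fz r j (n-2)
     + 2*(aa j * bb j) * of_int (n-3) * Fz r j (n-3) + (aa j * bb j)^2 * of_int (n-4) * Fz r j (n-4)
     = of_nat r * Fz r j (n-1) + (of_nat r + (2*of_nat r-1)*(aa j * bb j)) * Fz r j (n-2)
       + (3*of_nat r-1)*(aa j * bb j) * Fz r j (n-3) + (2*of_nat r-1)*(aa j * bb j)^2 * Fz r j (n-4)"
proof -
  define m where "m = nat (n-1)"
  have m: "int (Suc m) = n" "int m = n - 1" using assms(3) by (auto simp: m_def)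
  have e: "(\<Sum>i<5. coeff ((Ap j * Bp j)^2) i * (of_int (int (Suc m) - int i) * Fz r j (int (Suc m) - int i)))
       = (\<Sum>i<5. coeff (Nump r j) i * Fz r j (int m - int i))" by (rule rec_F1[OF assms(1,2)])
  have e2: "1 * (of_int n * Fz r j n) + 2 * (of_int (n-1) * Fz r j (n-1)) + (1 + 2*(aa j * bb j)) * (of_int (n-2) * Fz r j (n-2))
     + 2*(aa j * bb j) * (of_int (n-3) * Fz r j (n-3)) + (aa j * bb j)^2 * (of_int (n-4) * Fz r j (n-4))
     = of_nat r * Fz r j (n-1) + (of_nat r + (2*of_nat r-1)*(aa j * bb j)) * Fz r j (n-1-1)
       + (3*of_nat r-1)*(aa j * bb j) * Fz r j (n-1-2) + (2*of_nat r-1)*(aa j * bb j)^2 * Fz r j (n-1-3) + 0 * Fz r j (n-1-4)"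
    using e unfolding sum5 Q2eq[OF assms(1)] unfolding m
    by (simp add: Nump_def Let_def coeff_pCons eval_nat_numeral)
  show ?thesis using e2 by (simp add: algebra_simps)
qed
lemma crat_F_aux: assumes "j \<ge> 1"
  shows "r \<ge> 1 \<Longrightarrow> x = beta j \<Longrightarrow> crat r x n = Fz r j n"
proof (induction r x n rule: crat.induct)
  case (1 r' x n)
  show ?case
  proof (cases "n < 0")
    case True then show ?thesis by (simp add: crat.simps Fz_def)
  next
    case False
    show ?thesis
    proof (cases "n = 0")
      case True then show ?thesis by (simp add: crat.simps Fz_def FF0)
    next
      case False
      with \<open>\<not> n < 0\<close> have n1: "n \<ge> 1" by simp
      define d where "d = aa j * bb j"
      define R where "R = int r'"
      have xd: "1 - x = 4 * d" using beta_d[OF assms(1)] 1(6) d_def by simp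
      have IH: "crat r' x (n-1) = Fz r' j (n-1)" "crat r' x (n-2) = Fz r' j (n-2)"
        "crat r' x (n-3) = Fz r' j (n-3)" "crat r' x (n-4) = Fz r' j (n-4)"
        using 1(1-4)[OF \<open>\<not> n < 0\<close> False refl refl refl] 1(5,6) by auto
      have E: "of_int n * Fz r' j n = - (of_int (2*(n-4) + 6 - R) * Fz r' j (n - 1)
          + (of_int ((n-4) + 2 - R) + of_int (2*(n-4) + 5 - 2*R) / 4 * (4*d)) * Fz r' j (n - 2)
          + (of_int (2*(n-4) + 3 - 3*R) / 4 * (4*d)) * Fz r' j (n - 3)
          + of_int ((n-4) + 1 - 2*R) / 16 * (4*d)^2 * Fz r' j (n - 4))"
      proof -
        note X = rec_F2[OF assms(1) 1(5) n1]
        show ?thesis using X unfolding d_def[symmetric] R_def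
          by (simp add: field_simps power2_eq_square)
      qed
      have nz: "(of_int n :: rat) \<noteq> 0" using n1 by simp
      show ?thesis
        apply (subst crat.simps)
        using \<open>\<not> n < 0\<close> False
        apply (simp add: Let_def IH xd R_def[symmetric])
        using E nz by (simp add: field_simps)
    qed
  qed
qed
lemma crat_F: "j \<ge> 1 \<Longrightarrow> r \<ge> 1 \<Longrightarrow> crat r (beta j) n = Fz r j n"
  using crat_F_aux by blast



lemma mult_entry:
  assumes "A \<in> carrier_mat k k" "B \<in> carrier_mat k k" "i < k" "b < k"
  shows "(A * B) $$ (i, b) = (\<Sum>a<k. A $$ (i, a) * B $$ (a, b))"
  using assms by (simp add: scalar_prod_def atLeast0LessThan)

lemma prod_list_diag:
  "prod_list (map f [0..<k]) = (\<Prod>i<k. f i)"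
  by (induct k) (auto simp: lessThan_Suc mult.commute)

lemma det_colop_dvd:
  fixes M :: "rat poly mat" and e :: "nat \<Rightarrow> rat poly"
  assumes M: "M \<in> carrier_mat k k" and q: "q \<le> k" and e0: "e 0 = 1"
  and dv: "\<And>i b. i < k \<Longrightarrow> q \<le> b \<Longrightarrow> b < k \<Longrightarrow> p dvd (\<Sum>t\<le>q. e t * M $$ (i, b - t))"
  shows "p ^ (k - q) dvd det M"
proof -
  define T where "T = mat k k (\<lambda>(a,b). if q \<le> b then (if a \<le> b \<and> b - a \<le> q then e (b - a) else 0) else (if a = b then 1 else 0))"
  have T: "T \<in> carrier_mat k k" by (simp add: T_def)
  have ut: "upper_triangular T" by (auto simp: T_def upper_triangular_def)
  have dT: "det T = 1"
  proof -
    have "det T = prod_list (diag_mat T)" by (rule det_upper_triangular[OF ut T])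
    also have "\<dots> = (\<Prod>i<k. T $$ (i,i))" using T by (simp add: diag_mat_def prod_list_diag)
    also have "\<dots> = 1" by (rule prod.neutral) (auto simp: T_def e0)
    finally show ?thesis .
  qed
  define N where "N = M * T"
  have N: "N \<in> carrier_mat k k" using M T by (simp add: N_def)
  have Nent: "N $$ (i, b) = (\<Sum>t\<le>q. e t * M $$ (i, b - t))" if "i < k" "q \<le> b" "b < k" for i b
  proof -
    have "N $$ (i, b) = (\<Sum>a<k. M $$ (i, a) * T $$ (a, b))"
      unfolding N_def by (rule mult_entry[OF M T that(1,3)])
    also have "\<dots> = (\<Sum>a<k. if a \<in> {b-q..b} then M $$ (i, a) * e (b - a) else 0)"
      by (rule sum.cong) (use that in \<open>auto simp: T_def\<close>)
    also have "\<dots> = (\<Sum>a\<in>{..<k} \<inter> {b-q..b}. M $$ (i, a) * e (b - a))"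
      by (simp add: sum.inter_restrict)
    also have "{..<k} \<inter> {b-q..b} = {b-q..b}" using that by auto
    also have "(\<Sum>a\<in>{b-q..b}. M $$ (i, a) * e (b - a)) = (\<Sum>t\<le>q. e t * M $$ (i, b - t))"
      by (rule sum.reindex_bij_witness[of _ "\<lambda>t. b - t" "\<lambda>a. b - a"]) (use that in auto)
    finally show ?thesis .
  qed
  define M' where "M' = mat k k (\<lambda>(i,b). if q \<le> b then N $$ (i, b) div p else N $$ (i, b))"
  define D where "D = mat k k (\<lambda>(a,b). if a = b then (if q \<le> b then p else 1) else 0)"
  have M': "M' \<in> carrier_mat k k" by (simp add: M'_def)
  have D: "D \<in> carrier_mat k k" by (simp add: D_def)
  have "M' * D = N"
  proof (rule eq_matI)
    fix i b assume ib: "i < dim_row N" "b < dim_col N"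
    hence ib': "i < k" "b < k" using N by auto
    have "(M' * D) $$ (i, b) = (\<Sum>a<k. M' $$ (i, a) * D $$ (a, b))"
      by (rule mult_entry[OF M' D ib'])
    also have "\<dots> = (\<Sum>a<k. if a = b then M' $$ (i, b) * (if q \<le> b then p else 1) else 0)"
      by (rule sum.cong) (use ib' in \<open>auto simp: D_def\<close>)
    also have "\<dots> = M' $$ (i, b) * (if q \<le> b then p else 1)"
      using ib' by simp
    also have "\<dots> = N $$ (i, b)"
    proof (cases "q \<le> b")
      case True
      have "p dvd N $$ (i, b)" using dv[of i b] Nent[of i b] ib' True by simp
      then have "N $$ (i, b) div p * p = N $$ (i, b)" by (rule dvd_div_mult_self)
      then show ?thesis using ib' True by (simp add: M'_def)
    qed (use ib' in \<open>simp add: M'_def\<close>)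
    finally show "(M' * D) $$ (i, b) = N $$ (i, b)" .
  qed (use N M' D in auto)
  moreover have "det D = p ^ (k - q)"
  proof -
    have ut: "upper_triangular D" by (auto simp: D_def upper_triangular_def)
    have "det D = prod_list (diag_mat D)" by (rule det_upper_triangular[OF ut D])
    also have "\<dots> = (\<Prod>i<k. D $$ (i,i))" using D by (simp add: diag_mat_def prod_list_diag)
    also have "\<dots> = (\<Prod>b<k. if q \<le> b then p else 1)" by (rule prod.cong) (auto simp: D_def)
    also have "\<dots> = p ^ (k - q)"
    proof -
      have s: "{x. x < k \<and> q \<le> x} = {q..<k}" by auto
      show ?thesis by (subst prod.inter_filter[symmetric]) (auto simp: s)
    qed
    finally show ?thesis .
  qed
  moreover have "det N = det M"
    unfolding N_def using det_mult[OF M T] dT by simp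
  ultimately have "det M = det M' * p ^ (k - q)" using det_mult[OF M' D] by simp
  thus ?thesis by simp
qed

lemma AqF: assumes "j \<ge> 1"
  shows "fps_of_poly (Ap j ^ (j - r)) * FF r j = fps_of_poly (Ap j ^ (r - j) * Bp j ^ (r+j-1))"
proof -
  define A where "A = fps_of_poly (Ap j)"
  define I where "I = inverse A"
  have A0: "fps_nth A 0 = 1" by (simp add: A_def Ap_def)
  have AI: "A * I = 1" unfolding I_def by (rule inverse_mult_eq_1') (simp add: A0)
  have e: "(j - r) + r = (r - j) + j" by simp
  have "fps_of_poly (Ap j ^ (j - r)) * FF r j = A ^ ((j - r) + r) * fps_of_poly (Bp j ^ (r+j-1)) * I ^ j"
    by (simp add: FF_def Hp_def A_def I_def fps_of_poly_mult fps_of_poly_power power_add mult_ac)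
  also have "\<dots> = A ^ (r - j) * fps_of_poly (Bp j ^ (r+j-1)) * (A ^ j * I ^ j)"
    unfolding e by (simp add: power_add mult_ac)
  also have "\<dots> = fps_of_poly (Ap j ^ (r - j) * Bp j ^ (r+j-1))"
    unfolding inv_pow_cancel[OF AI] by (simp add: A_def fps_of_poly_mult fps_of_poly_power)
  finally show ?thesis .
qed

lemma degAp: "degree (Ap j) \<le> 1" by (simp add: Ap_def)
lemma degBp: "degree (Bp j) \<le> 1" by (simp add: Bp_def)

lemma kernel_rel: assumes j: "j \<ge> 1" and n: "n > 2*r - 1 + (j - r)"
  shows "(\<Sum>t\<le>j - r. coeff (Ap j ^ (j - r)) t * fps_nth (FF r j) (n - t)) = 0"
proof -
  let ?q = "j - r"
  have dq: "degree (Ap j ^ ?q) \<le> ?q" using degree_power_le[of "Ap j" ?q] degAp[of j] by (simp add: order_trans)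
  have "(\<Sum>t\<le>?q. coeff (Ap j ^ ?q) t * fps_nth (FF r j) (n - t)) =
        (\<Sum>t\<le>n. coeff (Ap j ^ ?q) t * fps_nth (FF r j) (n - t))"
  proof (rule sum.mono_neutral_left)
    show "\<forall>i\<in>{..n} - {..?q}. coeff (Ap j ^ ?q) i * fps_nth (FF r j) (n - i) = 0"
      using dq by (auto simp: coeff_eq_0)
  qed (use n in auto)
  also have "\<dots> = fps_nth (fps_of_poly (Ap j ^ ?q) * FF r j) n"
    by (simp add: fps_mult_nth atLeast0AtMost)
  also have "\<dots> = coeff (Ap j ^ (r - j) * Bp j ^ (r+j-1)) n"
    by (simp add: AqF[OF j])
  also have "\<dots> = 0"
  proof (rule coeff_eq_0)
    have "degree (Ap j ^ (r - j) * Bp j ^ (r+j-1)) \<le> (r - j) + (r + j - 1)"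
    proof -
      have "degree (Ap j ^ (r - j)) \<le> r - j" using degree_power_le[of "Ap j" "r-j"] degAp[of j] by (simp add: order_trans)
      moreover have "degree (Bp j ^ (r+j-1)) \<le> r + j - 1" using degree_power_le[of "Bp j" "r+j-1"] degBp[of j] by (simp add: order_trans)
      ultimately show ?thesis using degree_mult_le[of "Ap j ^ (r - j)" "Bp j ^ (r+j-1)"] by linarith
    qed
    also have "\<dots> < n" using n j by linarith
    finally show "degree (Ap j ^ (r - j) * Bp j ^ (r+j-1)) < n" .
  qed
  finally show ?thesis .
qed

definition Mx :: "nat \<Rightarrow> nat \<Rightarrow> rat poly mat" where
  "Mx r k = mat k k (\<lambda>(i, j). cseq r 1 [:0,1:] 0 (int k + 2 * int r - 1 + int j - int i))"

lemma Pk_Mx: "Pk r k 1 [:0,1:] 0 = det (Mx r k)" by (simp add: Pk_def Mx_def)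

lemma Mx_carrier: "Mx r k \<in> carrier_mat k k" by (simp add: Mx_def)

lemma dvd_P: assumes j: "j \<ge> 1" and r: "r \<ge> 1" and jk: "j - r \<le> k"
  shows "[:-beta j, 1:] ^ (k - (j - r)) dvd Pk r k 1 [:0,1:] 0"
proof -
  let ?q = "j - r"
  define e where "e t = [:coeff (Ap j ^ ?q) t:]" for t
  have e0: "e 0 = 1" by (simp add: e_def coeff_0_power Ap_def one_pCons)
  show ?thesis unfolding Pk_Mx
  proof (rule det_colop_dvd[OF Mx_carrier[of r k] jk, of e, OF e0])
    fix i b assume ib: "i < k" "?q \<le> b" "b < k"
    define n where "n = k + 2*r - 1 + b - i"
    have n: "n > 2*r - 1 + ?q" using ib r by (simp add: n_def)
    have idx: "int k + 2 * int r - 1 + int (b - t) - int i = int (n - t)" if "t \<le> ?q" for t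
      using that ib r by (simp add: n_def of_nat_diff)
    have "poly (\<Sum>t\<le>?q. e t * Mx r k $$ (i, b - t)) (beta j)
        = (\<Sum>t\<le>?q. coeff (Ap j ^ ?q) t * fps_nth (FF r j) (n - t))"
      unfolding poly_sum
    proof (rule sum.cong)
      fix t assume t: "t \<in> {..?q}"
      have "Mx r k $$ (i, b - t) = cseq r 1 [:0,1:] 0 (int (n - t))"
        using ib t idx[of t] by (simp add: Mx_def)
      then show "poly (e t * Mx r k $$ (i, b - t)) (beta j) = coeff (Ap j ^ ?q) t * fps_nth (FF r j) (n - t)"
        by (simp add: e_def poly_cseq crat_F[OF j r] Fz_def)
    qed simp
    also have "\<dots> = 0" by (rule kernel_rel[OF j n])
    finally show "[:-beta j, 1:] dvd (\<Sum>t\<le>?q. e t * Mx r k $$ (i, b - t))"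
      using poly_eq_0_iff_dvd by blast
  qed
qed




lemma deg2le: "degree [:x, y:] \<le> 1"
  using degree_pCons_le[of x "[:y:]"] by simp
lemma deg3le: "degree [:x, y, z:] \<le> 2"
  using degree_pCons_le[of x "[:y,z:]"] degree_pCons_le[of y "[:z:]"] by simp

lemma omX: "1 - [:0,1:] = ([:1,-1:] :: rat poly)" by (simp add: one_pCons)

lemma term_deg:
  fixes f c :: "rat poly"
  assumes "degree f \<le> k" "0 \<le> n - i \<Longrightarrow> degree c \<le> nat (n - i) div 2"
    "n - i < 0 \<Longrightarrow> c = 0" "0 \<le> n - i \<Longrightarrow> k + nat (n - i) div 2 \<le> nat n div 2"
  shows "degree (f * c) \<le> nat n div 2"
proof (cases "n - i < 0")
  case True then show ?thesis using assms by simp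
next
  case False
  then show ?thesis using assms degree_mult_le[of f c] by linarith
qed

lemma deg_cseq_aux:
  "a = 1 \<Longrightarrow> b = [:0,1:] \<Longrightarrow> g = 0 \<Longrightarrow> degree (cseq r a b g n) \<le> nat n div 2"
proof (induction r a b g n rule: cseq.induct)
  case (1 r a b g n)
  show ?case
  proof (cases "n \<le> 0")
    case True then show ?thesis by (subst cseq.simps) auto
  next
    case False
    have z: "cseq r a b g m = 0" if "m < 0" for m using that by (subst cseq.simps) simp
    have IH: "0 \<le> n - i \<Longrightarrow> degree (cseq r a b g (n - i)) \<le> nat (n - i) div 2" if "i \<in> {1,2,3,4}" for i
      using 1 False that by auto
    define F1 where "F1 = smult (of_int (2*(n-4) + 6 - int r)) (a::rat poly)"
    define F2 where "F2 = smult (of_int ((n-4) + 2 - int r)) (a^2) + smult (of_int (2*(n-4) + 5 - 2*int r) / 4) (a^2 - b)"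
    define F3 where "F3 = smult (of_int (2*(n-4) + 3 - 3*int r) / 4) (a * (a^2 - b)) + smult (1/2) g"
    define F4 where "F4 = smult (of_int ((n-4) + 1 - 2*int r) / 16) ((a^2 - b)^2)"
    have d1: "degree F1 \<le> 0" using 1 by (simp add: F1_def)
    have d2: "degree F2 \<le> 1" using 1 deg2le by (simp add: F2_def one_pCons power2_eq_square)
    have d3: "degree F3 \<le> 1" using 1 deg2le by (simp add: F3_def omX)
    have d4: "degree F4 \<le> 2" using 1 deg3le by (simp add: F4_def power2_eq_square omX)
    have e: "cseq r a b g n = - smult (1 / of_int (n - 4 + 4))
       (F1 * cseq r a b g (n-1) + F2 * cseq r a b g (n-2) + F3 * cseq r a b g (n-3) + F4 * cseq r a b g (n-4))"
      using False by (subst cseq.simps) (simp add: Let_def F1_def F2_def F3_def F4_def)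
    have t1: "degree (F1 * cseq r a b g (n-1)) \<le> nat n div 2"
      by (rule term_deg[OF d1 IH]) (auto intro: z)
    have t2: "degree (F2 * cseq r a b g (n-2)) \<le> nat n div 2"
      by (rule term_deg[OF d2 IH]) (auto intro: z)
    have t3: "degree (F3 * cseq r a b g (n-3)) \<le> nat n div 2"
      by (rule term_deg[OF d3 IH]) (auto intro: z)
    have t4: "degree (F4 * cseq r a b g (n-4)) \<le> nat n div 2"
      by (rule term_deg[OF d4 IH]) (auto intro: z)
    have "degree (F1 * cseq r a b g (n-1) + F2 * cseq r a b g (n-2) + F3 * cseq r a b g (n-3) + F4 * cseq r a b g (n-4)) \<le> nat n div 2"
      by (intro degree_add_le t1 t2 t3 t4)
    then show ?thesis unfolding e degree_minus by (rule order_trans[OF degree_smult_le])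
  qed
qed

lemma deg_cseq: "degree (cseq r 1 [:0,1:] 0 n) \<le> nat n div 2"
  by (rule deg_cseq_aux) auto

lemma sum_div2_le: "(\<Sum>i\<in>S. (x i::nat) div 2) \<le> (\<Sum>i\<in>S. x i) div 2"
proof -
  have "2 * (\<Sum>i\<in>S. x i div 2) = (\<Sum>i\<in>S. 2 * (x i div 2))" by (simp add: sum_distrib_left)
  also have "\<dots> \<le> (\<Sum>i\<in>S. x i)" by (rule sum_mono) simp
  finally show ?thesis by linarith
qed

lemma deg_det: "degree (det (Mx r k)) \<le> (k * (k + 2*r - 1)) div 2"
proof -
  let ?K = "k + 2*r - 1"
  have "det (Mx r k) = (\<Sum>p\<in>{p. p permutes {0..<k}}. signof p * (\<Prod>i = 0..<k. Mx r k $$ (i, p i)))"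
    by (rule det_def'[OF Mx_carrier])
  also have "degree \<dots> \<le> (k * ?K) div 2"
  proof (rule degree_sum_le)
    fix p assume "p \<in> {p. p permutes {0..<k}}"
    hence p: "p permutes {0..<k}" by simp
    have pk: "p i < k" if "i < k" for i using p that by (simp add: permutes_in_image)
    have "degree (\<Prod>i = 0..<k. Mx r k $$ (i, p i)) \<le> (\<Sum>i=0..<k. (?K + p i - i) div 2)"
    proof -
      have "degree (\<Prod>i = 0..<k. Mx r k $$ (i, p i)) \<le> (\<Sum>i=0..<k. degree (Mx r k $$ (i, p i)))"
        using degree_prod_sum_le[of "{0..<k}" "\<lambda>i. Mx r k $$ (i, p i)"] by (simp add: o_def)
      also have "\<dots> \<le> (\<Sum>i=0..<k. (?K + p i - i) div 2)"
      proof (rule sum_mono)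
        fix i assume i: "i \<in> {0..<k}"
        have "Mx r k $$ (i, p i) = cseq r 1 [:0,1:] 0 (int k + 2 * int r - 1 + int (p i) - int i)"
          using i pk[of i] by (simp add: Mx_def)
        moreover have "nat (int k + 2 * int r - 1 + int (p i) - int i) = ?K + p i - i" using i by auto
        ultimately show "degree (Mx r k $$ (i, p i)) \<le> (?K + p i - i) div 2"
          using deg_cseq[of r "int k + 2 * int r - 1 + int (p i) - int i"] by simp
      qed
      finally show ?thesis .
    qed
    also have "\<dots> \<le> (\<Sum>i=0..<k. ?K + p i - i) div 2" by (rule sum_div2_le)
    also have "(\<Sum>i=0..<k. ?K + p i - i) = k * ?K"
    proof -
      have "(\<Sum>i=0..<k. ?K + p i - i) + (\<Sum>i=0..<k. i) = (\<Sum>i=0..<k. ?K + p i)"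
        unfolding sum.distrib[symmetric] by (rule sum.cong) auto
      also have "\<dots> = k * ?K + (\<Sum>i=0..<k. p i)"
      proof -
        have "(\<Sum>i=0..<k. K + p i) = k * K + (\<Sum>i=0..<k. p i)" for K by (simp add: sum.distrib)
        then show ?thesis .
      qed
      also have "(\<Sum>i=0..<k. p i) = (\<Sum>i=0..<k. i)"
      proof -
        have "(\<Sum>i=0..<k. i) = (\<Sum>i\<in>p ` {0..<k}. i)" using permutes_image[OF p] by simp
        also have "\<dots> = (\<Sum>i=0..<k. p i)"
          by (subst sum.reindex) (auto intro: permutes_inj_on[OF p])
        finally show ?thesis by simp
      qed
      finally show ?thesis by simp
    qed
    finally have dp: "degree (\<Prod>i = 0..<k. Mx r k $$ (i, p i)) \<le> k * ?K div 2" .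
    have "degree (signof p * (\<Prod>i = 0..<k. Mx r k $$ (i, p i)) :: rat poly) \<le> degree (\<Prod>i = 0..<k. Mx r k $$ (i, p i))"
      using degree_mult_le[of "signof p :: rat poly" "\<Prod>i = 0..<k. Mx r k $$ (i, p i)"]
      by (simp add: of_int_poly)
    then show "degree (signof p * (\<Prod>i = 0..<k. Mx r k $$ (i, p i)) :: rat poly) \<le> k * ?K div 2"
      using dp by linarith
  qed (rule finite_permutations, simp)
  finally show ?thesis .
qed




lemma lin_coprime:
  fixes a b :: rat
  assumes "a \<noteq> b"
  shows "coprime [:1, a:] [:1, b:]"
proof (rule coprimeI)
  fix c assume c1: "c dvd [:1, a:]" and c2: "c dvd [:1, b:]"
  have "c dvd smult b [:1, a:] - smult a [:1, b:]"
    by (rule dvd_diff[OF dvd_smult[OF c1] dvd_smult[OF c2]])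
  also have "smult b [:1, a:] - smult a [:1, b:] = [:b - a:]" by simp
  finally have "c dvd [:b - a:]" .
  moreover have "is_unit [:b - a:]" using assms by (simp add: is_unit_const_poly_iff dvd_field_iff)
  ultimately show "is_unit c" by (rule dvd_unit_imp_unit)
qed

lemma aa_ne_bb: "j \<ge> 1 \<Longrightarrow> aa j \<noteq> bb j"
  using twoj_nz[of j] by (simp add: aa_def bb_def)

lemma bb_nz: "j \<ge> 1 \<Longrightarrow> bb j \<noteq> 0"
  using twoj_nz[of j] by (simp add: bb_def)

lemma poly_core:
  fixes W Gl :: "rat poly"
  assumes eq: "Gl * Ap j ^ k = W * Bp j ^ m" and dg: "degree Gl < m" and j: "j \<ge> 1"
  shows "W = 0"
proof -
  have c0: "coprime (Ap j) (Bp j)" unfolding Ap_def Bp_def by (rule lin_coprime[OF aa_ne_bb[OF j]])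
  have c1: "coprime (Bp j) (Ap j)" using c0 by (metis coprime_commute)
  have cop: "coprime (Bp j ^ m) (Ap j ^ k)" using c1 by simp
  have "Bp j ^ m dvd Gl * Ap j ^ k" unfolding eq by simp
  hence dv: "Bp j ^ m dvd Gl" using coprime_dvd_mult_left_iff[OF cop] by simp
  have Bnz: "Bp j \<noteq> 0" by (simp add: Bp_def)
  have "degree (Bp j) = 1" using bb_nz[OF j] by (simp add: Bp_def)
  hence dB: "degree (Bp j ^ m) = m" by (simp add: degree_power_eq[OF Bnz])
  have "Gl = 0"
  proof (rule ccontr)
    assume "Gl \<noteq> 0"
    from dvd_imp_degree_le[OF dv this] dB dg show False by simp
  qed
  then have "W * Bp j ^ m = 0" using eq by simp
  then show ?thesis using Bnz by simp
qed

lemma fps_core: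
  fixes W :: "rat poly"
  assumes r: "r \<ge> 1" and k: "k \<ge> 1" and dW: "degree W < k"
  and Gz: "\<And>n. 2*r + k - 1 \<le> n \<Longrightarrow> n < 2*r + k - 1 + k \<Longrightarrow> fps_nth (fps_of_poly W * FF r (r+k)) n = 0"
  shows "W = 0"
proof -
  define j where "j = r + k"
  define m where "m = 2*r + k - 1"
  have j: "j \<ge> 1" using r by (simp add: j_def)
  define G where "G = fps_of_poly W * FF r j"
  have AF: "fps_of_poly (Ap j ^ k) * FF r j = fps_of_poly (Bp j ^ m)"
  proof -
    have e: "r + j - 1 = m" "j - r = k" "r - j = 0" by (auto simp: j_def m_def)
    show ?thesis using AqF[OF j, of r] unfolding e by simp
  qed
  define Gl where "Gl = (\<Sum>t<m. monom (fps_nth G t) t)"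
  have cGl: "coeff Gl t = (if t < m then fps_nth G t else 0)" for t
    by (simp add: Gl_def coeff_sum)
  have m1: "m \<ge> 1" using r by (simp add: m_def)
  have dGl: "degree Gl < m"
  proof (cases "Gl = 0")
    case True then show ?thesis using m1 by simp
  next
    case False
    then have "coeff Gl (degree Gl) \<noteq> 0" by simp
    then show ?thesis using cGl[of "degree Gl"] by (auto split: if_splits)
  qed
  define R where "R = G - fps_of_poly Gl"
  have R0: "fps_nth R t = 0" if "t < m + k" for t
    using that Gz[of t] by (auto simp: R_def cGl G_def j_def m_def)
  define Pd where "Pd = W * Bp j ^ m - Gl * Ap j ^ k"
  have RA: "R * fps_of_poly (Ap j ^ k) = fps_of_poly Pd"
  proof -
    have "R * fps_of_poly (Ap j ^ k) = fps_of_poly W * (fps_of_poly (Ap j ^ k) * FF r j) - fps_of_poly Gl * fps_of_poly (Ap j ^ k)"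
      by (simp add: R_def G_def algebra_simps)
    also have "\<dots> = fps_of_poly Pd" unfolding AF by (simp add: Pd_def fps_of_poly_mult fps_of_poly_diff)
    finally show ?thesis .
  qed
  have dPd: "degree Pd < m + k"
  proof -
    have "degree (W * Bp j ^ m) \<le> degree W + m"
      using degree_mult_le[of W "Bp j ^ m"] degree_power_le[of "Bp j" m] degBp[of j] by (simp add: order_trans)
    moreover have "degree (Gl * Ap j ^ k) \<le> degree Gl + k"
      using degree_mult_le[of Gl "Ap j ^ k"] degree_power_le[of "Ap j" k] degAp[of j] by (simp add: order_trans)
    ultimately show ?thesis unfolding Pd_def using degree_diff_le_max[of "W * Bp j ^ m" "Gl * Ap j ^ k"] dW dGl by linarith
  qed
  have A0: "fps_nth (fps_of_poly (Ap j ^ k)) 0 = 1" by (simp add: Ap_def coeff_0_power)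
  have Rz: "fps_nth R n = 0" for n
  proof (induction n rule: less_induct)
    case (less n)
    show ?case
    proof (cases "n < m + k")
      case True then show ?thesis by (rule R0)
    next
      case False
      have "fps_nth (R * fps_of_poly (Ap j ^ k)) n = 0"
        unfolding RA using dPd False by (simp add: coeff_eq_0)
      moreover have "fps_nth (R * fps_of_poly (Ap j ^ k)) n = fps_nth R n"
      proof -
        have "fps_nth (R * fps_of_poly (Ap j ^ k)) n = (\<Sum>i=0..n. fps_nth R i * fps_nth (fps_of_poly (Ap j ^ k)) (n - i))"
          by (rule fps_mult_nth)
        also have "\<dots> = (\<Sum>i\<in>{n}. fps_nth R i * fps_nth (fps_of_poly (Ap j ^ k)) (n - i))"
          by (rule sum.mono_neutral_right) (use less in auto)
        also have "\<dots> = fps_nth R n" using A0 by simp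
        finally show ?thesis .
      qed
      ultimately show ?thesis by simp
    qed
  qed
  hence "R = 0" by (simp add: fps_eq_iff)
  hence GG: "G = fps_of_poly Gl" by (simp add: R_def)
  have "fps_of_poly (Gl * Ap j ^ k) = G * fps_of_poly (Ap j ^ k)"
    by (simp only: GG fps_of_poly_mult)
  also have "\<dots> = fps_of_poly W * (fps_of_poly (Ap j ^ k) * FF r j)" by (simp add: G_def mult_ac)
  also have "\<dots> = fps_of_poly (W * Bp j ^ m)" by (simp only: AF fps_of_poly_mult)
  finally have "fps_of_poly (Gl * Ap j ^ k) = fps_of_poly (W * Bp j ^ m)" .
  hence "Gl * Ap j ^ k = W * Bp j ^ m" by (simp add: fps_of_poly_eq_iff)
  then show ?thesis by (rule poly_core[OF _ dGl j])
qed

lemma det_Mx_nz: assumes r: "r \<ge> 1" and k: "k \<ge> 1"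
  shows "poly (det (Mx r k)) (beta (r+k)) \<noteq> 0"
proof -
  define j where "j = r + k"
  define m where "m = 2*r + k - 1"
  have j: "j \<ge> 1" using r by (simp add: j_def)
  define E where "E = map_mat (\<lambda>p. poly p (beta j)) (Mx r k)"
  have E: "E \<in> carrier_mat k k" by (simp add: E_def Mx_def)
  have Eent: "E $$ (i, b) = fps_nth (FF r j) (m + b - i)" if "i < k" "b < k" for i b
  proof -
    have "nat (int k + 2 * int r - 1 + int b - int i) = m + b - i" using that r by (simp add: m_def)
    moreover have "int k + 2 * int r - 1 + int b - int i \<ge> 0" using that r by simp
    ultimately show ?thesis using that
      by (simp add: E_def Mx_def poly_cseq crat_F[OF j r] Fz_def)
  qed
  have "det E \<noteq> 0"
  proof
    assume "det E = 0"
    then obtain v where v: "v \<in> carrier_vec k" "v \<noteq> 0\<^sub>v k" "E *\<^sub>v v = 0\<^sub>v k"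
      using det_0_iff_vec_prod_zero_field[OF E] by blast
    define W where "W = (\<Sum>t<k. monom (v $ (k - 1 - t)) t)"
    have cW: "coeff W t = (if t < k then v $ (k - 1 - t) else 0)" for t
      by (simp add: W_def coeff_sum)
    have dW: "degree W < k"
    proof (cases "W = 0")
      case True then show ?thesis using k by simp
    next
      case False
      then have "coeff W (degree W) \<noteq> 0" by simp
      then show ?thesis using cW[of "degree W"] by (auto split: if_splits)
    qed
    have Gz: "fps_nth (fps_of_poly W * FF r (r+k)) n = 0" if n: "2*r + k - 1 \<le> n" "n < 2*r + k - 1 + k" for n
    proof -
      define i where "i = m + k - 1 - n"
      have i: "i < k" using n r by (simp add: i_def m_def)
      have "fps_nth (fps_of_poly W * FF r j) n = (\<Sum>t\<le>n. coeff W t * fps_nth (FF r j) (n - t))"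
        by (simp add: fps_mult_nth atLeast0AtMost)
      also have "\<dots> = (\<Sum>t<k. coeff W t * fps_nth (FF r j) (n - t))"
      proof (rule sum.mono_neutral_right)
        show "{..<k} \<subseteq> {..n}" using n r by auto
      qed (auto simp: cW)
      also have "\<dots> = (\<Sum>t<k. v $ (k - 1 - t) * fps_nth (FF r j) (n - t))"
        by (rule sum.cong) (auto simp: cW)
      also have "\<dots> = (\<Sum>b<k. E $$ (i, b) * v $ b)"
      proof (rule sum.reindex_bij_witness[of _ "\<lambda>b. k - 1 - b" "\<lambda>t. k - 1 - t"])
        fix t assume t: "t \<in> {..<k}"
        have "n - t = m + (k - 1 - t) - i" using t n r i by (simp add: i_def m_def)
        then show "E $$ (i, k - 1 - t) * v $ (k - 1 - t) = v $ (k - 1 - t) * fps_nth (FF r j) (n - t)"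
          using Eent[OF i, of "k - 1 - t"] t by simp
      qed auto
      also have "\<dots> = (E *\<^sub>v v) $ i"
        using i E v(1) by (simp add: scalar_prod_def atLeast0LessThan mult.commute)
      also have "\<dots> = 0" using v(3) i by simp
      finally show ?thesis by (simp add: j_def)
    qed
    have "W = 0" by (rule fps_core[OF r k dW Gz])
    then have "v $ b = 0" if "b < k" for b
      using cW[of "k - 1 - b"] that by (simp add: W_def)
    then have "v = 0\<^sub>v k" using v(1) by (intro eq_vecI) auto
    with v(2) show False by simp
  qed
  moreover have "det E = poly (det (Mx r k)) (beta j)"
    unfolding E_def by (rule poly_hom.hom_det)
  ultimately show ?thesis by (simp add: j_def)
qed




lemma lin_coprime2:
  fixes c d :: rat
  assumes "c \<noteq> d"
  shows "coprime [:-c, 1:] [:-d, 1:]"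
proof (rule coprimeI)
  fix x assume x1: "x dvd [:-c, 1:]" and x2: "x dvd [:-d, 1:]"
  have "x dvd [:-c, 1:] - [:-d, 1:]" by (rule dvd_diff[OF x1 x2])
  also have "[:-c, 1:] - [:-d, 1:] = [:d - c:]" by simp
  finally have "x dvd [:d - c:]" .
  moreover have "is_unit [:d - c:]" using assms by (simp add: is_unit_const_poly_iff dvd_field_iff)
  ultimately show "is_unit x" by (rule dvd_unit_imp_unit)
qed

lemma beta_inj: "x \<ge> 1 \<Longrightarrow> y \<ge> 1 \<Longrightarrow> beta x = beta y \<Longrightarrow> x = y"
proof -
  assume x: "x \<ge> 1" and y: "y \<ge> 1" and e: "beta x = beta y"
  have "(of_nat (2*x-1) :: rat)^2 = (of_nat (2*y-1))^2"
    using e twoj_nz[OF x] twoj_nz[OF y] by (simp add: beta_def field_simps)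
  hence "(2*x-1)^2 = (2*y-1)^2" by (metis of_nat_eq_iff of_nat_power)
  hence "2*x-1 = 2*y-1"
  proof -
    assume h: "(2*x-1)^2 = (2*y-1)^2"
    show ?thesis
    proof (rule ccontr)
      assume "2*x-1 \<noteq> 2*y-1"
      then consider "2*x-1 < 2*y-1" | "2*y-1 < 2*x-1" by linarith
      then show False
      proof cases
        case 1 then have "(2*x-1)^2 < (2*y-1)^2" by (intro power_strict_mono) auto
        with h show False by simp
      next
        case 2 then have "(2*y-1)^2 < (2*x-1)^2" by (intro power_strict_mono) auto
        with h show False by simp
      qed
    qed
  qed
  thus "x = y" using x y by simp
qed

lemma factor_coprime: "x \<ge> 1 \<Longrightarrow> y \<ge> 1 \<Longrightarrow> x \<noteq> y \<Longrightarrow> coprime ([:-beta x, 1:] ^ a) ([:-beta y, 1:] ^ b)"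
  using lin_coprime2[of "beta x" "beta y"] beta_inj by auto

lemma factor_coprime1: "x \<ge> 1 \<Longrightarrow> y \<ge> 1 \<Longrightarrow> x \<noteq> y \<Longrightarrow> coprime [:-beta x, 1:] [:-beta y, 1:]"
  using lin_coprime2[of "beta x" "beta y"] beta_inj by auto

lemma prod_dvd_coprime:
  fixes f :: "nat \<Rightarrow> rat poly"
  assumes "finite S" "\<And>x. x \<in> S \<Longrightarrow> f x dvd P" "\<And>x y. x \<in> S \<Longrightarrow> y \<in> S \<Longrightarrow> x \<noteq> y \<Longrightarrow> coprime (f x) (f y)"
  shows "prod f S dvd P"
  using assms
proof (induction S rule: finite_induct)
  case empty then show ?case by simp
next
  case (insert x S)
  have "coprime (f x) (prod f S)"
    by (rule prod_coprime_right) (use insert in auto)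
  moreover have "prod f S dvd P" using insert by auto
  moreover have "f x dvd P" using insert by auto
  ultimately show ?case using insert by (simp add: divides_mult)
qed

lemma deg_lin_pow: "degree ([:c, 1:] ^ e :: rat poly) = e"
  by (simp add: degree_power_eq)

lemma gauss2: "2 * (\<Sum>t=1..n. t) = n * (n + 1::nat)"
  by (induction n) auto

lemma sum_k_minus: "(\<Sum>i=1..k-1. k - i) = (\<Sum>t=1..k-1. t::nat)"
  by (rule sum.reindex_bij_witness[of _ "\<lambda>t. k - t" "\<lambda>i. k - i"]) auto

theorem proposition4p5:
  fixes r k :: nat
  assumes "r \<ge> 1" and "k \<ge> 1"
  shows "\<exists>c::rat. c \<noteq> 0 \<and>
    Pk r k 1 [:0, 1:] 0 =
      smult c ((\<Prod>i = 1..r. [: - 1 / (of_nat (2*i - 1))^2, 1 :] ^ k) *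
               (\<Prod>i = 1..k - 1. [: - 1 / (of_nat (2*r + 2*i - 1))^2, 1 :] ^ (k - i)))"
proof -
  note r = assms(1) and k = assms(2)
  define P where "P = Pk r k 1 [:0, 1:] 0"
  define T1 where "T1 = (\<Prod>i = 1..r. [: - 1 / (of_nat (2*i - 1))^2, 1 :] ^ k :: rat poly)"
  define T2 where "T2 = (\<Prod>i = 1..k - 1. [: - 1 / (of_nat (2*r + 2*i - 1))^2, 1 :] ^ (k - i) :: rat poly)"
  have T1': "T1 = (\<Prod>i\<in>{1..r}. [:-beta i, 1:] ^ k)"
    unfolding T1_def by (rule prod.cong) (auto simp: beta_def)
  have T2': "T2 = (\<Prod>i\<in>{1..k-1}. [:-beta (r+i), 1:] ^ (k - i))"
    unfolding T2_def
  proof (rule prod.cong)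
    fix i assume "i \<in> {1..k-1}"
    have "2 * (r + i) - 1 = 2*r + 2*i - 1" by simp
    then show "[: - 1 / (of_nat (2*r + 2*i - 1))^2, 1 :] ^ (k - i) = [:-beta (r+i), 1:] ^ (k - i)"
      by (simp add: beta_def)
  qed simp
  have d1: "T1 dvd P" unfolding T1'
  proof (rule prod_dvd_coprime)
    fix i assume i: "i \<in> {1..r}"
    then have "[:-beta i, 1:] ^ (k - (i - r)) dvd P" unfolding P_def by (intro dvd_P) auto
    then show "[:-beta i, 1:] ^ k dvd P" using i by simp
  qed (auto intro: factor_coprime factor_coprime1)
  have d2: "T2 dvd P" unfolding T2'
  proof (rule prod_dvd_coprime)
    fix i assume i: "i \<in> {1..k-1}"
    then have "[:-beta (r+i), 1:] ^ (k - ((r+i) - r)) dvd P" unfolding P_def using r by (intro dvd_P) auto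
    then show "[:-beta (r+i), 1:] ^ (k - i) dvd P" by simp
  qed (auto intro: factor_coprime factor_coprime1)
  have cop: "coprime T1 T2" unfolding T1' T2'
    by (intro prod_coprime_left prod_coprime_right factor_coprime) auto
  have "T1 * T2 dvd P" by (rule divides_mult[OF d1 d2 cop])
  then obtain Q where PQ: "P = T1 * T2 * Q" by (elim dvdE)
  have Pnz: "P \<noteq> 0" using det_Mx_nz[OF r k] by (auto simp: P_def Pk_Mx)
  have T1nz: "T1 \<noteq> 0" unfolding T1' by (simp add: prod_zero_iff)  
  have T2nz: "T2 \<noteq> 0" unfolding T2' by (simp add: prod_zero_iff)  
  have Qnz: "Q \<noteq> 0" using Pnz PQ by auto
  have dT1: "degree T1 = r * k"
    unfolding T1' by (subst degree_prod_sum_eq) (auto simp: deg_lin_pow)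
  have dT2: "degree T2 = (\<Sum>i=1..k-1. k - i)"
    unfolding T2' by (subst degree_prod_sum_eq) (auto simp: deg_lin_pow)
  have dP: "degree P \<le> k * (k + 2*r - 1) div 2"
    using deg_det[of r k] by (simp add: P_def Pk_Mx)
  define S where "S = (\<Sum>i=1..k-1. k - i)"
  have hS: "2 * S = (k - 1) * k" unfolding S_def sum_k_minus gauss2 using k by simp
  have e1: "k + 2*r - 1 = (k - 1) + 2*r" using k by simp
  have "k * (k + 2*r - 1) = 2 * (r * k + S)"
    unfolding e1 distrib_left using hS by (simp add: algebra_simps)
  then have "degree T1 + degree T2 = k * (k + 2*r - 1) div 2"
    unfolding dT1 dT2 S_def[symmetric] by simp
  moreover have "degree P = degree T1 + degree T2 + degree Q"
    unfolding PQ using T1nz T2nz Qnz by (simp add: degree_mult_eq)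
  ultimately have "degree Q = 0" using dP by linarith
  then have Qc: "Q = [:coeff Q 0:]" by (metis coeff_pCons_0 degree_eq_zeroE)
  have "coeff Q 0 \<noteq> 0" using Qnz Qc by (metis pCons_0_0)
  moreover have "P = smult (coeff Q 0) (T1 * T2)"
    by (subst PQ, subst Qc) (simp add: mult.commute)
  ultimately show ?thesis unfolding P_def T1_def T2_def by blast
qed


end
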